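(* If $0<q<1$, $u>0$ and $v\in\mathbb{R}$, then \[ \left|\left(q^{u+iv};q\right)_{\infty}\right|\ge\left(q^{u};q\right)_{\infty}q^{v^{2}/4}, \qquad \Gamma_{q}(u)\ge\left|\Gamma_{q}(u+iv)\right|q^{v^{2}/4}, \] and \[ \frac{\vartheta_{4}\left(v\vert iu\right)}{\vartheta_{4}\left(0\vert iu\right)}\ge e^{-\pi v^{2}/u}. \]
   Context: For $0<q<1$ and $a\in\mathbb{C}$, $(a;q)_{\infty}=\prod_{k=0}^{\infty}(1-aq^{k})$ and $(a_1,\dots,a_r;q)_\infty=\prod_{s=1}^r(a_s;q)_\infty$; $q^{w}=e^{w\log q}$ for complex $w$. The $q$-Gamma function is $\Gamma_{q}(x)=(1-q)^{1-x}\frac{(q;q)_{\infty}}{(q^{x};q)_{\infty}}$ (with $(1-q)^{1-x}=e^{(1-x)\log(1-q)}$). The Jacobi theta function is $\vartheta_{4}(v\vert\tau)=\sum_{n=-\infty}^{\infty}p^{n^{2}}(-z)^{n}=(p^{2},pz,p/z;p^{2})_{\infty}$ where $z=e^{2\pi iv}$, $p=e^{\pi i\tau}$, $\Im(\tau)>0$. *)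

theory Defs
  imports "HOL-Analysis.Analysis"
begin

definition cpowq :: "real \<Rightarrow> complex \<Rightarrow> complex" where
  "cpowq q w = exp (w * of_real (ln q))"

definition qpoch_inf :: "complex \<Rightarrow> real \<Rightarrow> complex" where
  "qpoch_inf a q = (\<Prod>k. 1 - a * of_real q ^ k)"

definition qGamma :: "real \<Rightarrow> complex \<Rightarrow> complex" where
  "qGamma q x = exp ((1 - x) * of_real (ln (1 - q))) * qpoch_inf (of_real q) q
                / qpoch_inf (cpowq q x) q"

definition theta4 :: "complex \<Rightarrow> complex \<Rightarrow> complex" where
  "theta4 v tau = (let z = exp (2 * of_real pi * \<i> * v); p = exp (of_real pi * \<i> * tau)
     in (\<Sum>\<^sub>\<infinity>n::int. p ^ (nat (n^2)) * (- z) powi n))"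

end

theory Submission
  imports Defs
begin


lemma qpoch_conv:
  assumes "0 < q" "q < 1" "cmod a < 1"
  shows "convergent_prod (\<lambda>k. 1 - a * of_real q ^ k)"
proof -
  have "convergent_prod (\<lambda>k. 1 + (- (a * of_real q ^ k)))"
  proof (rule summable_imp_convergent_prod_complex)
    have "summable (\<lambda>k. cmod a * q ^ k)"
      using assms by (intro summable_mult summable_geometric) auto
    then show "summable (\<lambda>k. cmod (- (a * complex_of_real q ^ k)))"
      using assms by (simp add: norm_mult norm_power)
  next
    fix k
    have "cmod (a * of_real q ^ k) = cmod a * q ^ k"
      using assms by (simp add: norm_mult norm_power)
    also have "\<dots> < 1"
      using assms by (smt (verit, best) mult_left_le norm_ge_zero power_le_one)
    finally show "- (a * complex_of_real q ^ k) \<noteq> - 1" by auto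
  qed
  then show ?thesis by simp
qed

lemma qpoch_lim:
  assumes "0 < q" "q < 1" "cmod a < 1"
  shows "(\<lambda>n. \<Prod>k\<le>n. 1 - a * of_real q ^ k) \<longlonglongrightarrow> qpoch_inf a q"
  unfolding qpoch_inf_def using convergent_prod_LIMSEQ[OF qpoch_conv[OF assms]] by simp

lemma qpoch_nz:
  assumes "0 < q" "q < 1" "cmod a < 1"
  shows "qpoch_inf a q \<noteq> 0"
  unfolding qpoch_inf_def
proof (rule prodinf_nonzero[OF qpoch_conv[OF assms]])
  fix k
  have "cmod (a * of_real q ^ k) = cmod a * q ^ k"
    using assms by (simp add: norm_mult norm_power)
  also have "\<dots> < 1"
    using assms by (smt (verit, best) mult_left_le norm_ge_zero power_le_one)
  finally show "1 - a * complex_of_real q ^ k \<noteq> 0" by auto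
qed

lemma qpoch_real:
  assumes "0 < q" "q < 1" "0 \<le> r" "r < 1"
  shows "Im (qpoch_inf (of_real r) q) = 0" "Re (qpoch_inf (of_real r) q) > 0"
    "(\<lambda>n. \<Prod>k\<le>n. 1 - r * q ^ k) \<longlonglongrightarrow> Re (qpoch_inf (of_real r) q)"
proof -
  have c: "cmod (of_real r) < 1" using assms by simp
  have L: "(\<lambda>n. \<Prod>k\<le>n. 1 - of_real r * of_real q ^ k) \<longlonglongrightarrow> qpoch_inf (of_real r) q"
    by (rule qpoch_lim[OF assms(1,2) c])
  have eq: "(\<Prod>k\<le>n. 1 - of_real r * of_real q ^ k) = (of_real (\<Prod>k\<le>n. 1 - r * q ^ k) :: complex)" for n
    by simp
  have L': "(\<lambda>n. of_real (\<Prod>k\<le>n. 1 - r * q ^ k) :: complex) \<longlonglongrightarrow> qpoch_inf (of_real r) q"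
    using L unfolding eq .
  from tendsto_Re[OF L'] show R: "(\<lambda>n. \<Prod>k\<le>n. 1 - r * q ^ k) \<longlonglongrightarrow> Re (qpoch_inf (of_real r) q)"
    by (simp only: Re_complex_of_real)
  from tendsto_Im[OF L'] have "(\<lambda>n. 0) \<longlonglongrightarrow> Im (qpoch_inf (of_real r) q)" by (simp only: Im_complex_of_real)
  then show I: "Im (qpoch_inf (of_real r) q) = 0"
    using LIMSEQ_const_iff by metis
  have nn: "0 \<le> (\<Prod>k\<le>n. 1 - r * q ^ k)" for n
  proof (intro prod_nonneg)
    fix k show "0 \<le> 1 - r * q ^ k"
      using assms by (smt (verit, best) mult_left_le power_le_one)
  qed
  have "0 \<le> Re (qpoch_inf (of_real r) q)"
    by (rule tendsto_lowerbound[OF R]) (use nn in auto)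
  moreover have "Re (qpoch_inf (of_real r) q) \<noteq> 0"
    using qpoch_nz[OF assms(1,2) c] I complex_eq_iff by force
  ultimately show "Re (qpoch_inf (of_real r) q) > 0" by simp
qed

lemma qpoch_cmod_ge:
  assumes "0 < q" "q < 1" "cmod a < 1"
  shows "cmod (qpoch_inf a q) \<ge> Re (qpoch_inf (of_real (cmod a)) q)"
proof -
  have R: "(\<lambda>n. \<Prod>k\<le>n. 1 - cmod a * q ^ k) \<longlonglongrightarrow> Re (qpoch_inf (of_real (cmod a)) q)"
    using qpoch_real(3)[of q "cmod a"] assms by simp
  have N: "(\<lambda>n. cmod (\<Prod>k\<le>n. 1 - a * of_real q ^ k)) \<longlonglongrightarrow> cmod (qpoch_inf a q)"
    by (intro tendsto_norm qpoch_lim assms)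
  show ?thesis
  proof (rule LIMSEQ_le[OF R N], intro exI allI impI)
    fix n
    have "(\<Prod>k\<le>n. 1 - cmod a * q ^ k) \<le> (\<Prod>k\<le>n. cmod (1 - a * of_real q ^ k))"
    proof (rule prod_mono, rule conjI)
      fix k
      show "0 \<le> 1 - cmod a * q ^ k"
        using assms by (smt (verit, best) mult_left_le norm_ge_zero power_le_one)
      have "cmod (a * of_real q ^ k) = cmod a * q ^ k"
        using assms by (simp add: norm_mult norm_power)
      then show "1 - cmod a * q ^ k \<le> cmod (1 - a * of_real q ^ k)"
        by (metis norm_one norm_triangle_ineq2)
    qed
    also have "\<dots> = cmod (\<Prod>k\<le>n. 1 - a * of_real q ^ k)"
      by (simp add: prod_norm)
    finally show "(\<Prod>k\<le>n. 1 - cmod a * q ^ k) \<le> cmod (\<Prod>k\<le>n. 1 - a * of_real q ^ k)" .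
  qed
qed

lemma cpowq_real: "0 < q \<Longrightarrow> cpowq q (of_real u) = of_real (q powr u)"
  unfolding cpowq_def powr_def by (simp flip: exp_of_real)

lemma cpowq_norm: "0 < q \<Longrightarrow> cmod (cpowq q (Complex u v)) = q powr u"
  unfolding cpowq_def powr_def by (simp add: norm_exp_eq_Re)

lemma part12:
  fixes q u v :: real
  assumes "0 < q" "q < 1" "0 < u"
  shows "(cmod (qpoch_inf (cpowq q (Complex u v)) q)
           \<ge> Re (qpoch_inf (cpowq q (of_real u)) q) * q powr (v^2 / 4)
         \<and> Im (qpoch_inf (cpowq q (of_real u)) q) = 0)
       \<and> (Re (qGamma q (of_real u)) \<ge> cmod (qGamma q (Complex u v)) * q powr (v^2 / 4)
         \<and> Im (qGamma q (of_real u)) = 0)"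
proof -
  have qu: "0 \<le> q powr u" "q powr u < 1"
    using assms powr_less_mono2[of u q 1] by auto
  have "q powr (v^2/4) \<le> 1 powr (v^2/4)"
    by (rule powr_mono2) (use assms in auto)
  then have qv: "q powr (v^2/4) \<le> 1" "0 \<le> q powr (v^2/4)"
    by simp_all
  define Pc where "Pc = qpoch_inf (cpowq q (Complex u v)) q"
  define Pr where "Pr = qpoch_inf (of_real (q powr u)) q"
  have PrI: "Im Pr = 0" and PrR: "Re Pr > 0"
    unfolding Pr_def using qpoch_real[OF assms(1,2) qu] by auto
  have Pc: "cmod Pc \<ge> Re Pr"
    unfolding Pc_def Pr_def using qpoch_cmod_ge[of q "cpowq q (Complex u v)"] assms qu
    by (simp add: cpowq_norm)
  have Qc: "cmod (of_real q :: complex) < 1" using assms by simp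
  define Q where "Q = qpoch_inf (of_real q) q"
  have QI: "Im Q = 0" and QR: "Re Q > 0"
    unfolding Q_def using qpoch_real[of q q] assms by auto
  have cp: "cpowq q (of_real u) = of_real (q powr u)" using cpowq_real assms by simp
  have part1: "cmod Pc \<ge> Re Pr * q powr (v^2 / 4)"
    using Pc qv PrR by (smt (verit, best) mult_left_le)
  define E where "E = exp ((1 - u) * ln (1 - q))"
  have E1: "exp ((1 - of_real u) * of_real (ln (1 - q))) = (of_real E :: complex)"
    unfolding E_def by (simp flip: exp_of_real)
  have E2: "cmod (exp ((1 - Complex u v) * of_real (ln (1 - q)))) = E"
    unfolding E_def by (simp add: norm_exp_eq_Re)
  have Epos: "E > 0" unfolding E_def by simp
  have Q': "Q = of_real (Re Q)" using QI complex_eq_iff by auto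
  have Pr': "Pr = of_real (Re Pr)" using PrI complex_eq_iff by auto
  have G1: "qGamma q (of_real u) = of_real (E * Re Q / Re Pr)"
    unfolding qGamma_def cp E1 Q_def[symmetric] Pr_def[symmetric]
    by (subst Q', subst Pr') simp
  have cQ: "cmod Q = Re Q" using QI QR by (simp add: cmod_eq_Re)
  have G2: "cmod (qGamma q (Complex u v)) = E * Re Q / cmod Pc"
    unfolding qGamma_def Pc_def[symmetric] Q_def[symmetric]
    by (simp only: norm_mult norm_divide E2 cQ)
  have "E * Re Q / cmod Pc \<le> E * Re Q / Re Pr"
    using Pc PrR Epos QR by (intro divide_left_mono) (auto intro!: mult_pos_pos)
  moreover have "E * Re Q / cmod Pc * q powr (v^2/4) \<le> E * Re Q / cmod Pc"
    using qv Epos QR PrR Pc by (intro mult_left_le) auto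
  ultimately have part2: "Re (qGamma q (of_real u)) \<ge> cmod (qGamma q (Complex u v)) * q powr (v^2 / 4)"
    unfolding G1 G2 by simp
  show ?thesis
    using part1 part2 PrI G1 unfolding Pc_def Pr_def cp by simp
qed


definition Qf :: "real \<Rightarrow> nat \<Rightarrow> real" where
  "Qf q m = (\<Prod>i<m. 1 - q ^ Suc i)"

definition Gb :: "real \<Rightarrow> nat \<Rightarrow> nat \<Rightarrow> real" where
  "Gb q m k = (if k \<le> m then Qf q m / (Qf q k * Qf q (m - k)) else 0)"

lemma Qf_0 [simp]: "Qf q 0 = 1" by (simp add: Qf_def)
lemma Qf_Suc: "Qf q (Suc m) = Qf q m * (1 - q ^ Suc m)" by (simp add: Qf_def)

lemma Qf_pos: assumes "0 < q" "q < 1" shows "Qf q m > 0"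
  unfolding Qf_def
proof (intro prod_pos)
  fix i show "0 < 1 - q ^ Suc i" using power_Suc_less_one[OF assms, of i] by simp
qed

lemma Qf_le1: assumes "0 < q" "q < 1" shows "Qf q m \<le> 1"
  unfolding Qf_def
proof (intro prod_le_1 conjI)
  fix i show "0 \<le> 1 - q ^ Suc i" using power_Suc_less_one[OF assms, of i] by simp
  show "1 - q ^ Suc i \<le> 1" using assms by simp
qed

lemma Qf_dec: assumes "0 < q" "q < 1" shows "decseq (Qf q)"
proof (rule decseq_SucI)
  fix n
  have "Qf q n * (1 - q ^ Suc n) \<le> Qf q n * 1"
    using Qf_pos[OF assms, of n] assms by (intro mult_left_mono) auto
  then show "Qf q (Suc n) \<le> Qf q n" by (simp add: Qf_Suc)
qed

lemma pascal_field:
  fixes A B C a b :: real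
  assumes "B \<noteq> 0" "C \<noteq> 0" "1 - a \<noteq> 0" "1 - b \<noteq> 0"
  shows "A * (1 - a * b) / (B * (1 - a) * (C * (1 - b))) = A / (B * (1 - a) * C) + b * (A / (B * (C * (1 - b))))"
proof -
  define s t where "s = 1 - a" and "t = 1 - b"
  have a: "a = 1 - s" and b: "b = 1 - t" by (simp_all add: s_def t_def)
  have "s \<noteq> 0" "t \<noteq> 0" using assms by (simp_all add: s_def t_def)
  then have "A * (1 - (1 - s) * (1 - t)) / (B * s * (C * t)) = A / (B * s * C) + (1 - t) * (A / (B * (C * t)))"
    using assms by (simp add: field_simps)
  then show ?thesis unfolding a b by simp
qed

lemma Gb_pascal:
  assumes "0 < q" "q < 1"
  shows "Gb q (Suc m) (Suc k) = Gb q m (Suc k) + q ^ (m - k) * Gb q m k"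
proof (cases "k \<le> m")
  case False then show ?thesis by (simp add: Gb_def)
next
  case True
  note pos = Qf_pos[OF assms]
  show ?thesis
  proof (cases "k = m")
    case True then show ?thesis using pos[of m] pos[of "Suc m"] by (simp add: Gb_def)
  next
    case False
    with True have km: "k < m" by simp
    obtain d where d: "m - k = Suc d" using km by (metis Suc_diff_Suc)
    have md: "m - Suc k = d" using d by simp
    have "Suc m = Suc k + Suc d" using d km by arith
    then have qm: "q ^ Suc m = q ^ Suc k * q ^ Suc d"
      by (metis power_add)
    have "m = k + Suc d" using d km by arith
    then have qm2: "q ^ m = q ^ k * q ^ Suc d"
      by (metis power_add)
    have a1: "1 - q ^ Suc k \<noteq> 0" and a2: "1 - q ^ Suc d \<noteq> 0"
      using assms by (metis eq_iff_diff_eq_0 less_numeral_extra(4) power_less_one_iff zero_less_Suc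
          less_imp_le)+
    have "Gb q (Suc m) (Suc k) = Qf q m * (1 - q ^ Suc k * q ^ Suc d) / (Qf q k * (1 - q ^ Suc k) * (Qf q d * (1 - q ^ Suc d)))"
      using True by (simp add: Gb_def Qf_Suc d qm qm2)
    moreover have "Gb q m (Suc k) = Qf q m / (Qf q k * (1 - q ^ Suc k) * Qf q d)"
      using km by (simp add: Gb_def Qf_Suc md)
    moreover have "Gb q m k = Qf q m / (Qf q k * (Qf q d * (1 - q ^ Suc d)))"
      using True by (simp add: Gb_def Qf_Suc d)
    ultimately show ?thesis
      using pascal_field[of "Qf q k" "Qf q d" "q ^ Suc k" "q ^ Suc d" "Qf q m"] pos[of k] pos[of d] a1 a2
      unfolding d by simp
  qed
qed

lemma Gb_0: "0 < q \<Longrightarrow> q < 1 \<Longrightarrow> Gb q m 0 = 1"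
  using Qf_pos[of q m] by (simp add: Gb_def)

lemma Gb_sym: assumes "k \<le> m" shows "Gb q m (m - k) = Gb q m k"
proof -
  have "m - (m - k) = k" using assms by simp
  then show ?thesis unfolding Gb_def using assms by (simp only: mult.commute) simp
qed

lemma tri_Suc: "Suc k * k div 2 = k * (k - 1) div 2 + k"
proof -
  have "Suc k * k = k * (k - 1) + 2 * k" by (cases k) auto
  then show ?thesis by simp
qed

lemma qbinom:
  fixes X Y :: complex
  assumes "0 < q" "q < 1"
  shows "(\<Prod>i<m. X + of_real (q ^ i) * Y) =
         (\<Sum>k\<le>m. of_real (q ^ (k * (k - 1) div 2) * Gb q m k) * X ^ (m - k) * Y ^ k)"
proof (induction m)
  case 0 then show ?case by (simp add: Gb_0[OF assms])
next
  case (Suc m)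
  define c where "c m k = (of_real (q ^ (k * (k - 1) div 2) * Gb q m k) :: complex)" for m k
  have rec: "c (Suc m) (Suc k) = c m (Suc k) + of_real (q ^ m) * c m k" for k
  proof (cases "k \<le> m")
    case True
    have e: "Suc k * k div 2 + (m - k) = m + k * (k - 1) div 2"
      unfolding tri_Suc using True by arith
    have "q ^ (Suc k * k div 2) * q ^ (m - k) = q ^ m * q ^ (k * (k - 1) div 2)"
      by (metis e power_add)
    then have "q ^ (Suc k * (Suc k - 1) div 2) * (Gb q m (Suc k) + q ^ (m - k) * Gb q m k) = q ^ (Suc k * (Suc k - 1) div 2) * Gb q m (Suc k) + q ^ m * (q ^ (k * (k - 1) div 2) * Gb q m k)"
      by (simp add: algebra_simps)
    then show ?thesis
      unfolding c_def Gb_pascal[OF assms] by (metis of_real_add of_real_mult of_real_power)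
  next
    case False then show ?thesis by (simp add: c_def Gb_def)
  qed
  have cz: "c m (Suc m) = 0" by (simp add: c_def Gb_def)
  have c0: "c m 0 = 1" for m by (simp add: c_def Gb_0[OF assms])
  have IH: "(\<Prod>i<m. X + of_real (q ^ i) * Y) = (\<Sum>k\<le>m. c m k * X ^ (m - k) * Y ^ k)"
    using Suc.IH by (simp add: c_def)
  have A: "(\<Sum>k\<le>m. c m k * X ^ (Suc m - k) * Y ^ k) = X ^ Suc m + (\<Sum>k\<le>m. c m (Suc k) * X ^ (m - k) * Y ^ Suc k)"
  proof -
    have "(\<Sum>k\<le>Suc m. c m k * X ^ (Suc m - k) * Y ^ k) = (\<Sum>k\<le>m. c m k * X ^ (Suc m - k) * Y ^ k)"
      by (simp add: cz)
    moreover have "(\<Sum>k\<le>Suc m. c m k * X ^ (Suc m - k) * Y ^ k) = X ^ Suc m + (\<Sum>k\<le>m. c m (Suc k) * X ^ (m - k) * Y ^ Suc k)"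
      by (subst sum.atMost_Suc_shift) (simp add: c0)
    ultimately show ?thesis using cz by simp
  qed
  have B: "(\<Sum>k\<le>m. c m k * X ^ (m - k) * Y ^ k) * X = (\<Sum>k\<le>m. c m k * X ^ (Suc m - k) * Y ^ k)"
    by (simp add: sum_distrib_right sum_distrib_left Suc_diff_le algebra_simps)
  have "(\<Prod>i<Suc m. X + of_real (q ^ i) * Y) = (\<Sum>k\<le>m. c m k * X ^ (m - k) * Y ^ k) * (X + of_real (q ^ m) * Y)"
    by (simp only: prod.lessThan_Suc IH)
  also have "\<dots> = (\<Sum>k\<le>m. c m k * X ^ (Suc m - k) * Y ^ k) + (\<Sum>k\<le>m. of_real (q ^ m) * c m k * X ^ (m - k) * Y ^ Suc k)"
  proof -
    have C: "(\<Sum>k\<le>m. c m k * X ^ (m - k) * Y ^ k) * (of_real (q ^ m) * Y) = (\<Sum>k\<le>m. of_real (q ^ m) * c m k * X ^ (m - k) * Y ^ Suc k)"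
      unfolding sum_distrib_right by (rule sum.cong) (simp_all add: algebra_simps)
    show ?thesis unfolding distrib_left B C ..
  qed
  also have "\<dots> = X ^ Suc m + (\<Sum>k\<le>m. c (Suc m) (Suc k) * X ^ (m - k) * Y ^ Suc k)"
    unfolding A rec by (simp add: algebra_simps sum.distrib)
  also have "\<dots> = (\<Sum>k\<le>Suc m. c (Suc m) k * X ^ (Suc m - k) * Y ^ k)"
    by (subst sum.atMost_Suc_shift) (simp add: c0)
  finally show ?case by (simp add: c_def)
qed



lemma e1: assumes "j \<le> n" "1 \<le> (n::nat)" shows "n*(n-1) + n*(2*n-1) + j*j = (n+j)*(n+j-1) + (2*n-1)*(n-j)"
proof -
  have h: "int (n - 1) = int n - 1" "int (2*n-1) = 2*int n - 1" "int (n+j-1) = int n + int j - 1" "int (n - j) = int n - int j"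
    using assms by auto
  have "int (n*(n-1) + n*(2*n-1) + j*j) = int ((n+j)*(n+j-1) + (2*n-1)*(n-j))"
    unfolding of_nat_add of_nat_mult h by (simp add: algebra_simps)
  then show ?thesis by (simp only: int_int_eq)
qed

lemma e2: assumes "j \<le> n" "1 \<le> (n::nat)" shows "n*(n-1) + n*(2*n-1) + j*j = (n-j)*(n-j-1) + (2*n-1)*(n+j)"
proof (cases "j = n")
  case True
  have h: "int (n - 1) = int n - 1" "int (2*n-1) = 2*int n - 1" 
    using assms by auto
  have "int (n*(n-1) + n*(2*n-1) + n*n) = int ((2*n-1)*(n+n))"
    unfolding of_nat_add of_nat_mult h by (simp add: algebra_simps)
  then show ?thesis using True by (simp only: int_int_eq)
next
  case False
  have h: "int (n - 1) = int n - 1" "int (2*n-1) = 2*int n - 1" "int (n-j-1) = int n - int j - 1" "int (n - j) = int n - int j"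
    using assms False by auto
  have "int (n*(n-1) + n*(2*n-1) + j*j) = int ((n-j)*(n-j-1) + (2*n-1)*(n+j))"
    unfolding of_nat_add of_nat_mult h by (simp add: algebra_simps)
  then show ?thesis by (simp only: int_int_eq)
qed

lemma sum_split_sym:
  fixes h :: "nat \<Rightarrow> 'a::comm_monoid_add"
  shows "(\<Sum>k\<le>2*n. h k) = h n + (\<Sum>j=1..n. h (n - j) + h (n + j))"
proof (induction n arbitrary: h)
  case 0 then show ?case by simp
next
  case (Suc n)
  have "(\<Sum>k\<le>2*Suc n. h k) = h 0 + (\<Sum>k\<le>Suc (2*n). h (Suc k))"
    by (simp add: sum.atMost_Suc_shift del: sum.atMost_Suc)
  also have "\<dots> = h 0 + (\<Sum>k\<le>2*n. h (Suc k)) + h (Suc (Suc (2*n)))"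
    by (simp add: add.assoc)
  also have "\<dots> = h 0 + (h (Suc n) + (\<Sum>j=1..n. h (Suc (n - j)) + h (Suc (n + j)))) + h (Suc (Suc (2*n)))"
    using Suc.IH[of "\<lambda>k. h (Suc k)"] by simp
  also have "(\<Sum>j=1..n. h (Suc (n - j)) + h (Suc (n + j))) = (\<Sum>j=1..n. h (Suc n - j) + h (Suc n + j))"
    by (intro sum.cong) (auto simp: Suc_diff_le)
  also have "h 0 + (h (Suc n) + (\<Sum>j=1..n. h (Suc n - j) + h (Suc n + j))) + h (Suc (Suc (2*n)))
      = h (Suc n) + ((\<Sum>j=1..n. h (Suc n - j) + h (Suc n + j)) + (h (Suc n - Suc n) + h (Suc n + Suc n)))"
    by (simp add: ac_simps mult_2 mult_2_right)
  also have "\<dots> = h (Suc n) + (\<Sum>j=1..Suc n. h (Suc n - j) + h (Suc n + j))"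
    by (subst sum.cl_ivl_Suc) simp
  finally show ?case .
qed

lemma prod_lessThan_add:
  fixes f :: "nat \<Rightarrow> 'a::comm_monoid_mult"
  shows "(\<Prod>i<n+m. f i) = (\<Prod>i<n. f i) * (\<Prod>i<m. f (n + i))"
  by (induction m) (simp_all add: mult.assoc)

lemma sum_2l: "(\<Sum>l<n. 2 * l) = n * (n - (1::nat))"
  by (induction n) (auto simp: algebra_simps)

lemma even_tri: "2 * (k * (k - 1) div 2) = k * (k - (1::nat))"
  by (cases k) auto

lemma cis_factor:
  fixes r x :: real
  shows "(of_real r * cis x - 1) * (cis x - of_real r) = - cis x * of_real (1 - 2 * r * cos x + r^2)"
proof -
  have "cis x ^ 2 + 1 = 2 * of_real (cos x) * cis x"
    by (simp add: complex_eq_iff power2_eq_square algebra_simps)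
  then have "of_real r * (cis x ^ 2 + 1) = of_real r * (2 * of_real (cos x) * cis x)" by simp
  then show ?thesis by (simp add: algebra_simps power2_eq_square)
qed



lemma finite_jtp:
  fixes p x :: real
  assumes p: "0 < p" "p < 1"
  shows "(\<Prod>l<n. 1 - 2 * p^(2*l+1) * cos x + p^(4*l+2)) =
         Gb (p^2) (2*n) n + 2 * (\<Sum>j=1..n. (-1)^j * Gb (p^2) (2*n) (n+j) * p^(j*j) * cos (real j * x))"
proof (cases "n = 0")
  case True
  have "0 < p^2" "p^2 < 1" using p by (auto simp: power_less_one_iff)
  then show ?thesis using True by (simp add: Gb_0)
next
  case False
  then have n1: "1 \<le> n" by simp
  have q: "0 < p^2" "p^2 < 1" using p by (auto simp: power_less_one_iff)
  define z where "z = cis x"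
  define G where "G k = Gb (p^2) (2*n) k" for k
  define \<kappa> where "\<kappa> = n*(n-1) + n*(2*n-1)"
  define S where "S = (\<Prod>l<n. 1 - 2 * p^(2*l+1) * cos x + p^(4*l+2))"
  define R where "R = G n + 2 * (\<Sum>j=1..n. (-1)^j * G (n+j) * p^(j*j) * cos (real j * x))"
  define X where "X = (of_real (p^(2*n-1)) * z :: complex)"
  define f where "f i = X + of_real ((p^2)^i) * (-1)" for i
  define h where "h k = of_real ((p^2)^(k*(k-1) div 2) * G k) * X^(2*n-k) * (-1)^k" for k
  have QB: "(\<Prod>i<2*n. f i) = (\<Sum>k\<le>2*n. h k)"
    unfolding f_def h_def G_def by (rule qbinom[OF q])
  have fl: "f (n - Suc l) * f (n + l) = of_real (p^(2*(n - Suc l) + (2*n-1))) * (- z) * of_real (1 - 2 * p^(2*l+1) * cos x + p^(4*l+2))"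
    if "l < n" for l
  proof -
    have ex1: "2*n-1 = 2*(n - Suc l) + (2*l+1)" using that by arith
    have ex2: "2*(n+l) = (2*n-1) + (2*l+1)" using that by arith
    have f1: "f (n - Suc l) = of_real (p^(2*(n - Suc l))) * (of_real (p^(2*l+1)) * z - 1)"
    proof -
      have pw: "p^(2*n-1) = p^(2*(n - Suc l)) * p^(2*l+1)" by (subst ex1) (simp only: power_add)
      have pw1: "(p^2)^(n - Suc l) = p^(2*(n - Suc l))" by (simp add: power_mult)
      show ?thesis unfolding f_def X_def pw pw1 by (simp add: algebra_simps)
    qed
    have f2: "f (n + l) = of_real (p^(2*n-1)) * (z - of_real (p^(2*l+1)))"
    proof -
      have "(p^2)^(n+l) = p^(2*(n+l))" by (simp only: power_mult)
      also have "\<dots> = p^((2*n-1) + (2*l+1))" by (simp only: ex2)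
      also have "\<dots> = p^(2*n-1) * p^(2*l+1)" by (rule power_add)
      finally have pw2: "(p^2)^(n+l) = p^(2*n-1) * p^(2*l+1)" .
      show ?thesis unfolding f_def X_def pw2 by (simp add: algebra_simps)
    qed
    have ee: "(2*l+1)*2 = 4*l+2" by simp
    have sq: "(p^(2*l+1))^2 = p^(4*l+2)" by (simp only: power_mult[symmetric] ee)
    have "f (n - Suc l) * f (n + l) = of_real (p^(2*(n - Suc l))) * of_real (p^(2*n-1)) * ((of_real (p^(2*l+1)) * z - 1) * (z - of_real (p^(2*l+1))))"
      unfolding f1 f2 by (simp add: algebra_simps)
    also have "\<dots> = of_real (p^(2*(n - Suc l))) * of_real (p^(2*n-1)) * (- z * of_real (1 - 2 * p^(2*l+1) * cos x + p^(4*l+2)))"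
      unfolding z_def cis_factor sq ..
    finally show ?thesis by (simp add: power_add algebra_simps)
  qed
  have sumk: "(\<Sum>l<n. 2*(n - Suc l) + (2*n-1)) = \<kappa>"
  proof -
    have "(\<Sum>l<n. 2*(n - Suc l)) = (\<Sum>l<n. 2*l)"
      by (rule sum.nat_diff_reindex)
    then show ?thesis unfolding \<kappa>_def sum.distrib sum_2l by simp
  qed
  have L: "(\<Prod>i<2*n. f i) = of_real (p^\<kappa>) * (- z)^n * of_real S"
  proof -
    have "(\<Prod>i<2*n. f i) = (\<Prod>i<n. f i) * (\<Prod>i<n. f (n + i))"
      using prod_lessThan_add[of f n n] by (simp add: mult_2)
    also have "(\<Prod>i<n. f i) = (\<Prod>l<n. f (n - Suc l))"
      by (rule prod.nat_diff_reindex[symmetric])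
    also have "(\<Prod>l<n. f (n - Suc l)) * (\<Prod>i<n. f (n + i)) = (\<Prod>l<n. f (n - Suc l) * f (n + l))"
      by (rule prod.distrib[symmetric])
    also have "\<dots> = (\<Prod>l<n. of_real (p^(2*(n - Suc l) + (2*n-1))) * (- z) * of_real (1 - 2 * p^(2*l+1) * cos x + p^(4*l+2)))"
      by (rule prod.cong) (simp_all add: fl)
    also have "\<dots> = of_real (\<Prod>l<n. p^(2*(n - Suc l) + (2*n-1))) * (- z)^n * of_real S"
      unfolding S_def prod.distrib by simp
    also have "(\<Prod>l<n. p^(2*(n - Suc l) + (2*n-1))) = p^\<kappa>"
      unfolding sumk[symmetric] power_sum ..
    finally show ?thesis .
  qed
  have hk: "h k = (-1)^k * of_real (G k * p^(k*(k-1) + (2*n-1)*(2*n-k))) * z^(2*n-k)" for k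
  proof -
    define a where "a = k*(k-1)"
    define b where "b = (2*n-1)*(2*n-k)"
    have A: "(p^2)^(k*(k-1) div 2) = p^a"
      unfolding a_def by (simp only: power_mult[symmetric] even_tri)
    have B: "X^(2*n-k) = of_real (p^b) * z^(2*n-k)"
      unfolding X_def b_def by (simp add: power_mult power_mult_distrib)
    show ?thesis unfolding h_def A B unfolding a_def[symmetric] b_def[symmetric] power_add
      by (simp add: ac_simps)
  qed
  have hn: "h n = (-1)^n * z^n * of_real (p^\<kappa>) * of_real (G n)"
  proof -
    have "n*(n-1) + (2*n-1)*(2*n-n) = \<kappa>" unfolding \<kappa>_def by (simp add: mult.commute)
    moreover have "2*n-n = n" by simp
    ultimately show ?thesis unfolding hk by (simp add: algebra_simps)
  qed
  have hj: "h (n - j) + h (n + j) = (-1)^n * z^n * of_real (p^\<kappa>) * of_real (2 * ((-1)^j * G (n+j) * p^(j*j) * cos (real j * x)))"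
    if j: "j \<in> {1..n}" for j
  proof -
    have jn: "j \<le> n" using j by simp
    define C where "C = (-1)^(n+j) * (of_real (G (n+j) * p^(\<kappa> + j*j)) :: complex)"
    have hp: "h (n + j) = (-1)^(n+j) * of_real (G (n+j) * p^(\<kappa> + j*j)) * z^(n-j)"
    proof -
      have "(n+j)*(n+j-1) + (2*n-1)*(2*n-(n+j)) = \<kappa> + j*j"
        using e1[OF jn n1] unfolding \<kappa>_def by simp
      moreover have "2*n-(n+j) = n-j" by simp
      ultimately show ?thesis unfolding hk by simp
    qed
    have hm: "h (n - j) = (-1)^(n+j) * of_real (G (n+j) * p^(\<kappa> + j*j)) * z^(n+j)"
    proof -
      have "(n-j)*(n-j-1) + (2*n-1)*(2*n-(n-j)) = \<kappa> + j*j"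
        using e2[OF jn n1] jn unfolding \<kappa>_def by simp
      moreover have "2*n-(n-j) = n+j" using jn by simp
      moreover have "G (n-j) = G (n+j)"
        unfolding G_def using Gb_sym[of "n+j" "2*n" "p^2"] jn by (simp add: mult_2)
      moreover have "(-1::complex)^(n-j) = (-1)^(n+j)"
      proof -
        have eq: "n + j = (n - j) + 2*j" using jn by simp
        have "(-1::complex)^(n+j) = (-1)^((n - j) + 2*j)" by (simp only: eq)
        also have "\<dots> = (-1)^(n-j) * ((-1)^2)^j" by (simp only: power_add power_mult)
        also have "\<dots> = (-1)^(n-j)" by simp
        finally show ?thesis by simp
      qed
      ultimately show ?thesis unfolding hk by simp
    qed
    have zs: "z^(n-j) + z^(n+j) = z^n * of_real (2 * cos (real j * x))"
    proof -
      have zj: "z^j * cis (- (real j * x)) = 1"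
        unfolding z_def by (simp add: Complex.DeMoivre cis_mult)
      have "z^(n-j) = z^(n-j) * (z^j * cis (- (real j * x)))" using zj by simp
      also have "\<dots> = z^n * cis (- (real j * x))"
        using jn by (simp add: mult.assoc[symmetric] power_add[symmetric])
      finally have a: "z^(n-j) = z^n * cis (- (real j * x))" .
      have b: "z^(n+j) = z^n * cis (real j * x)"
        unfolding z_def power_add by (simp add: Complex.DeMoivre)
      have c: "cis (- (real j * x)) + cis (real j * x) = of_real (2 * cos (real j * x))"
        by (simp add: complex_eq_iff)
      show ?thesis unfolding a b c[symmetric] by (simp add: algebra_simps)
    qed
    have "h (n - j) + h (n + j) = C * (z^(n-j) + z^(n+j))"
      unfolding hm hp C_def by (simp only: distrib_left mult.assoc add.commute)
    also have "\<dots> = C * (z^n * of_real (2 * cos (real j * x)))" unfolding zs ..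
    finally show ?thesis unfolding C_def by (simp add: power_add algebra_simps)
  qed
  have Rsum: "(\<Sum>k\<le>2*n. h k) = (-1)^n * z^n * of_real (p^\<kappa>) * of_real R"
  proof -
    have "(\<Sum>k\<le>2*n. h k) = h n + (\<Sum>j=1..n. h (n - j) + h (n + j))"
      by (rule sum_split_sym)
    also have "\<dots> = (-1)^n * z^n * of_real (p^\<kappa>) * of_real (G n) +
        (\<Sum>j=1..n. (-1)^n * z^n * of_real (p^\<kappa>) * of_real (2 * ((-1)^j * G (n+j) * p^(j*j) * cos (real j * x))))"
      using hn hj by simp
    also have "\<dots> = (-1)^n * z^n * of_real (p^\<kappa>) * of_real R"
      unfolding R_def sum_distrib_left[symmetric] of_real_add of_real_sum of_real_mult distrib_left
      by simp
    finally show ?thesis .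
  qed
  have "of_real (p^\<kappa>) * (- z)^n * of_real S = (\<Prod>i<2*n. f i)" by (rule L[symmetric])
  also have "\<dots> = (\<Sum>k\<le>2*n. h k)" by (rule QB)
  also have "\<dots> = (-1)^n * z^n * of_real (p^\<kappa>) * of_real R" by (rule Rsum)
  finally have E1: "of_real (p^\<kappa>) * (- z)^n * of_real S = (-1)^n * z^n * of_real (p^\<kappa>) * of_real R" .
  have E2: "of_real (p^\<kappa>) * (- z)^n * of_real S = ((-1)^n * z^n * of_real (p^\<kappa>)) * (of_real S :: complex)"
  proof -
    have "(- z)^n = (-1)^n * z^n" by (rule power_minus)
    then show ?thesis by (simp only: mult_ac)
  qed
  have nz: "(-1)^n * z^n * of_real (p^\<kappa>) \<noteq> (0::complex)"
    using p unfolding z_def by simp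
  have "((-1)^n * z^n * of_real (p^\<kappa>)) * (of_real S :: complex) = ((-1)^n * z^n * of_real (p^\<kappa>)) * of_real R"
    by (rule trans[OF E2[symmetric] E1])
  then have "(of_real S :: complex) = of_real R"
    using nz mult_left_cancel by blast
  then have "S = R" by (simp only: of_real_eq_iff)
  then show ?thesis unfolding S_def R_def G_def .
qed



lemma Qf_lim:
  assumes "0 < q" "q < 1"
  obtains L where "L > 0" "Qf q \<longlonglongrightarrow> L" "\<And>m. L \<le> Qf q m"
proof -
  have "0 \<le> q" using assms by simp
  note R = qpoch_real[OF assms this assms(2)]
  define L where "L = Re (qpoch_inf (of_real q) q)"
  have "(\<lambda>n. \<Prod>k\<le>n. 1 - q * q ^ k) = (\<lambda>n. Qf q (Suc n))"
    unfolding Qf_def by (simp add: lessThan_Suc_atMost)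
  with R(3) have "(\<lambda>n. Qf q (Suc n)) \<longlonglongrightarrow> L" unfolding L_def by simp
  then have lim: "Qf q \<longlonglongrightarrow> L" by (rule LIMSEQ_imp_Suc)
  have "L \<le> Qf q m" for m by (rule decseq_ge[OF Qf_dec[OF assms] lim])
  moreover have "L > 0" using R(2) unfolding L_def .
  ultimately show ?thesis using that lim by blast
qed

lemma Gb_bound:
  assumes "0 < q" "q < 1" "L > 0" "\<And>m. L \<le> Qf q m"
  shows "0 \<le> Gb q m k" "Gb q m k \<le> 1 / (L * L)"
proof -
  note pos = Qf_pos[OF assms(1,2)]
  show "0 \<le> Gb q m k" unfolding Gb_def using pos[of m] pos[of k] pos[of "m-k"] by simp
  have "Qf q m / (Qf q k * Qf q (m - k)) \<le> 1 / (L * L)"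
  proof (rule frac_le)
    show "0 \<le> (1::real)" by simp
    show "Qf q m \<le> 1" by (rule Qf_le1[OF assms(1,2)])
    show "0 < L * L" using assms by simp
    show "L * L \<le> Qf q k * Qf q (m - k)"
      using assms(3,4) by (intro mult_mono) (auto intro: less_imp_le[OF pos])
  qed
  then show "Gb q m k \<le> 1 / (L * L)" unfolding Gb_def using assms(3) by auto
qed

lemma Gb_lim:
  assumes "0 < q" "q < 1" "L > 0" "Qf q \<longlonglongrightarrow> L"
  shows "(\<lambda>n. Gb q (2*n) (n + c)) \<longlonglongrightarrow> 1 / L"
proof -
  have l1: "(\<lambda>n. Qf q (2*n)) \<longlonglongrightarrow> L"
    using filterlim_compose[OF assms(4) filterlim_subseq[of "\<lambda>n. 2*n"]]
    by (simp add: strict_mono_def o_def)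
  have l2: "(\<lambda>n. Qf q (n + c)) \<longlonglongrightarrow> L"
    using LIMSEQ_ignore_initial_segment[OF assms(4)] .
  have l3: "(\<lambda>n. Qf q (n - c)) \<longlonglongrightarrow> L"
    using filterlim_compose[OF assms(4) filterlim_minus_const_nat_at_top] by (simp add: o_def)
  have lim0: "(\<lambda>n. Qf q (2*n) / (Qf q (n + c) * Qf q (n - c))) \<longlonglongrightarrow> L / (L * L)"
    using assms(3) by (intro tendsto_intros l1 l2 l3) auto
  have "L / (L * L) = 1 / L" using assms(3) by simp
  with lim0 have lim1: "(\<lambda>n. Qf q (2*n) / (Qf q (n + c) * Qf q (n - c))) \<longlonglongrightarrow> 1 / L" by simp
  have ev: "eventually (\<lambda>n. Qf q (2*n) / (Qf q (n + c) * Qf q (n - c)) = Gb q (2*n) (n + c)) sequentially"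
  proof (rule eventually_sequentiallyI[of c])
    fix n assume "c \<le> n"
    then have "n + c \<le> 2*n" "2*n - (n + c) = n - c" by auto
    then show "Qf q (2*n) / (Qf q (n + c) * Qf q (n - c)) = Gb q (2*n) (n + c)"
      unfolding Gb_def by simp
  qed
  show ?thesis by (rule Lim_transform_eventually[OF lim1 ev])
qed

definition Theta :: "real \<Rightarrow> real \<Rightarrow> real" where
  "Theta p x = 1 + 2 * (\<Sum>j. (-1)^Suc j * p^(Suc j * Suc j) * cos (real (Suc j) * x))"

lemma Theta_summable:
  assumes "0 < p" "p < 1"
  shows "summable (\<lambda>j. (-1)^Suc j * p^(Suc j * Suc j) * cos (real (Suc j) * x))"
proof (rule summable_comparison_test[of _ "\<lambda>j. p^Suc j"])
  show "summable (\<lambda>j. p ^ Suc j)" using assms by (simp add: summable_geometric)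
  show "\<exists>N. \<forall>n\<ge>N. norm ((-1)^Suc n * p^(Suc n * Suc n) * cos (real (Suc n) * x)) \<le> p ^ Suc n"
  proof (intro exI allI impI)
    fix n :: nat
    have P: "p^(Suc n * Suc n) \<le> p^Suc n"
      using assms by (intro power_decreasing) auto
    have "norm ((-1)^Suc n * p^(Suc n * Suc n) * cos (real (Suc n) * x)) = p^(Suc n * Suc n) * \<bar>cos (real (Suc n) * x)\<bar>"
      using assms by (simp add: abs_mult)
    also have "\<dots> \<le> p^(Suc n * Suc n) * 1"
      using assms by (intro mult_left_mono) auto
    also have "\<dots> \<le> p ^ Suc n" using P by simp
    finally show "norm ((-1)^Suc n * p^(Suc n * Suc n) * cos (real (Suc n) * x)) \<le> p ^ Suc n" .
  qed
qed

lemma S_lim: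
  assumes p: "0 < p" "p < 1" and L: "L > 0" "Qf (p^2) \<longlonglongrightarrow> L" "\<And>m. L \<le> Qf (p^2) m"
  shows "(\<lambda>n. \<Prod>l<n. 1 - 2 * p^(2*l+1) * cos x + p^(4*l+2)) \<longlonglongrightarrow> Theta p x / L"
proof -
  have q: "0 < p^2" "p^2 < 1" using p by (auto simp: power_less_one_iff)
  define g where "g n j = (-1)^j * Gb (p^2) (2*n) (n+j) * p^(j*j) * cos (real j * x)" for n j
  define a where "a j n = (if Suc j \<le> n then g n (Suc j) else 0)" for j n
  define b where "b j = (-1)^Suc j * (1/L) * p^(Suc j * Suc j) * cos (real (Suc j) * x)" for j
  have eqS: "(\<Prod>l<n. 1 - 2 * p^(2*l+1) * cos x + p^(4*l+2)) = Gb (p^2) (2*n) n + 2 * (\<Sum>j. a j n)" for n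
  proof -
    have "(\<Sum>j. a j n) = (\<Sum>j<n. a j n)"
      by (rule suminf_finite) (auto simp: a_def)
    also have "\<dots> = (\<Sum>j<n. g n (Suc j))" by (rule sum.cong) (auto simp: a_def)
    also have "\<dots> = (\<Sum>j=1..n. g n j)" by (rule sum_bounds_lt_plus1)
    finally show ?thesis unfolding finite_jtp[OF p] g_def by simp
  qed
  have T: "(\<lambda>n. \<Sum>j. a j n) \<longlonglongrightarrow> (\<Sum>j. b j)"
  proof -
    have "eventually (\<lambda>n. summable (\<lambda>k. norm (a k n))) sequentially \<and>
           summable (\<lambda>n. norm (b n)) \<and> ((\<lambda>n. suminf (\<lambda>k. a k n)) \<longlonglongrightarrow> suminf b)"
    proof (rule tannerys_theorem[where M = "\<lambda>j. (1 / (L*L)) * p^Suc j"])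
      fix k
      have A: "(\<lambda>n. (-1)^Suc k * Gb (p^2) (2*n) (n + Suc k) * p^(Suc k * Suc k) * cos (real (Suc k) * x))
             \<longlonglongrightarrow> b k"
        unfolding b_def by (intro tendsto_intros Gb_lim[OF q L(1,2)])
      have B: "eventually (\<lambda>n. (-1)^Suc k * Gb (p^2) (2*n) (n + Suc k) * p^(Suc k * Suc k) * cos (real (Suc k) * x) = a k n) sequentially"
        by (rule eventually_sequentiallyI[of "Suc k"]) (simp add: a_def g_def)
      show "(\<lambda>n. a k n) \<longlonglongrightarrow> b k"
        by (rule Lim_transform_eventually[OF A B])
    next
      show "eventually (\<lambda>(k, n). norm (a k n) \<le> (1 / (L*L)) * p^Suc k) (at_top \<times>\<^sub>F sequentially)"
      proof (rule always_eventually, clarify)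
        fix k n
        have G: "0 \<le> Gb (p^2) (2*n) (n + Suc k)" "Gb (p^2) (2*n) (n + Suc k) \<le> 1 / (L*L)"
          using Gb_bound[OF q L(1,3)] by auto
        have P: "p^(Suc k * Suc k) \<le> p^Suc k" using p by (intro power_decreasing) auto
        have C: "\<bar>cos (real (Suc k) * x)\<bar> \<le> 1" by simp
        have "\<bar>Gb (p^2) (2*n) (n + Suc k) * p^(Suc k * Suc k) * cos (real (Suc k) * x)\<bar>
              \<le> (1 / (L*L)) * p^Suc k * 1"
          unfolding abs_mult using G P C p
          by (intro mult_mono) auto
        moreover have "0 \<le> (1 / (L*L)) * p^Suc k" using p L(1) by simp
        ultimately show "norm (a k n) \<le> (1 / (L*L)) * p^Suc k"
          by (simp add: a_def g_def abs_mult)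
      qed
    next
      show "summable (\<lambda>j. (1 / (L*L)) * p^Suc j)"
        using p by (intro summable_mult) (simp add: summable_geometric)
    qed simp
    then show ?thesis by simp
  qed
  have sb: "(\<Sum>j. b j) = (1/L) * (\<Sum>j. (-1)^Suc j * p^(Suc j * Suc j) * cos (real (Suc j) * x))"
    unfolding b_def using suminf_mult[OF Theta_summable[OF p, of x], of "1/L"]
    by (simp add: algebra_simps)
  have "(\<lambda>n. Gb (p^2) (2*n) n + 2 * (\<Sum>j. a j n)) \<longlonglongrightarrow> 1/L + 2 * (\<Sum>j. b j)"
    using Gb_lim[OF q L(1,2), of 0] by (intro tendsto_intros T) simp
  moreover have "1/L + 2 * (\<Sum>j. b j) = Theta p x / L"
    unfolding sb Theta_def using L(1) by (simp add: add_divide_distrib)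
  ultimately show ?thesis unfolding eqS by simp
qed

lemma Theta_ineq:
  assumes p: "0 < p" "p < 1"
  shows "Theta p 0 > 0" "Theta p x \<ge> Theta p 0"
proof -
  have q: "0 < p^2" "p^2 < 1" using p by (auto simp: power_less_one_iff)
  obtain L where L: "L > 0" "Qf (p^2) \<longlonglongrightarrow> L" "\<And>m. L \<le> Qf (p^2) m"
    using Qf_lim[OF q] by blast
  obtain M where M: "M > 0" "Qf p \<longlonglongrightarrow> M" "\<And>m. M \<le> Qf p m"
    using Qf_lim[OF p] by blast
  define S where "S y n = (\<Prod>l<n. 1 - 2 * p^(2*l+1) * cos y + p^(4*l+2))" for y n
  have lim: "S y \<longlonglongrightarrow> Theta p y / L" for y
    unfolding S_def by (rule S_lim[OF p L])
  have sq: "p^(4*l+2) = (p^(2*l+1))^2" for l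
  proof -
    have "(2*l+1)*2 = 4*l+2" by simp
    then show ?thesis by (simp only: power_mult[symmetric])
  qed
  have r01: "0 \<le> p^(2*l+1)" "p^(2*l+1) \<le> 1" for l
    using p power_le_one[of p "2*l+1"] by auto
  have mono: "S 0 n \<le> S x n" for n
    unfolding S_def
  proof (rule prod_mono, rule conjI)
    fix l
    define r where "r = p^(2*l+1)"
    have r0: "0 \<le> r" unfolding r_def using r01 by simp
    have e0: "1 - 2 * r * 1 + r^2 = (1 - r)^2" by (simp add: power2_eq_square algebra_simps)
    show "0 \<le> 1 - 2 * p^(2*l+1) * cos 0 + p^(4*l+2)"
      unfolding sq r_def[symmetric] cos_zero e0 by simp
    have "r * cos x \<le> r" using r0 by (simp add: mult_left_le)
    then show "1 - 2 * p^(2*l+1) * cos 0 + p^(4*l+2) \<le> 1 - 2 * p^(2*l+1) * cos x + p^(4*l+2)"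
      unfolding sq r_def[symmetric] cos_zero by simp
  qed
  have low: "M * M \<le> S 0 n" for n
  proof -
    have "(\<Prod>l<n. (1 - p^Suc l)^2) \<le> S 0 n"
      unfolding S_def
    proof (rule prod_mono, rule conjI)
      fix l
      define r where "r = p^(2*l+1)"
      have e0: "1 - 2 * r * 1 + r^2 = (1 - r)^2" by (simp add: power2_eq_square algebra_simps)
      have a: "r \<le> p^Suc l" unfolding r_def using p by (intro power_decreasing) auto
      have b: "p^Suc l \<le> 1" using p power_le_one[of p "Suc l"] by simp
      show "0 \<le> (1 - p^Suc l)^2" by simp
      have "(1 - p^Suc l)^2 \<le> (1 - r)^2"
        using a b by (intro power_mono) auto
      then show "(1 - p^Suc l)^2 \<le> 1 - 2 * p^(2*l+1) * cos 0 + p^(4*l+2)"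
        unfolding sq r_def[symmetric] cos_zero e0 .
    qed
    moreover have "(\<Prod>l<n. (1 - p^Suc l)^2) = Qf p n * Qf p n"
      unfolding Qf_def power2_eq_square prod.distrib ..
    moreover have "M * M \<le> Qf p n * Qf p n"
      using M Qf_pos[OF p, of n] by (intro mult_mono) auto
    ultimately show ?thesis by simp
  qed
  have "M * M \<le> Theta p 0 / L"
    using LIMSEQ_le_const[OF lim[of 0], of "M*M"] low by blast
  moreover have "0 < M * M" using M(1) by simp
  ultimately have "Theta p 0 / L > 0" by linarith
  then show "Theta p 0 > 0" using L(1) by (simp add: zero_less_divide_iff)
  have "Theta p 0 / L \<le> Theta p x / L"
    using LIMSEQ_le[OF lim[of 0] lim[of x]] mono by blast
  then show "Theta p x \<ge> Theta p 0" using L(1) by (simp add: divide_le_cancel)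
qed



lemma has_sum_int_split:
  fixes f :: "int \<Rightarrow> 'a::banach"
  assumes s1: "summable (\<lambda>j. norm (f (int (Suc j))))"
      and s2: "summable (\<lambda>j. norm (f (- int (Suc j))))"
  shows "(f has_sum (f 0 + ((\<Sum>j. f (int (Suc j))) + (\<Sum>j. f (- int (Suc j)))))) UNIV"
proof -
  define A where "A = range (\<lambda>j. int (Suc j))"
  define B where "B = range (\<lambda>j. - int (Suc j))"
  have h1: "((\<lambda>j. f (int (Suc j))) has_sum (\<Sum>j. f (int (Suc j)))) UNIV"
    by (rule norm_summable_imp_has_sum[OF s1 summable_sums[OF summable_norm_cancel[OF s1]]])
  have h2: "((\<lambda>j. f (- int (Suc j))) has_sum (\<Sum>j. f (- int (Suc j)))) UNIV"
    by (rule norm_summable_imp_has_sum[OF s2 summable_sums[OF summable_norm_cancel[OF s2]]])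
  have inj1: "inj_on (\<lambda>j. int (Suc j)) UNIV" by (auto simp: inj_on_def)
  have inj2: "inj_on (\<lambda>j. - int (Suc j)) UNIV" by (auto simp: inj_on_def)
  have hA: "(f has_sum (\<Sum>j. f (int (Suc j)))) A"
    unfolding A_def using has_sum_reindex[OF inj1, of f] h1 by (simp add: o_def)
  have hB: "(f has_sum (\<Sum>j. f (- int (Suc j)))) B"
    unfolding B_def using has_sum_reindex[OF inj2, of f] h2 by (simp add: o_def)
  have disj: "A \<inter> B = {}" unfolding A_def B_def by auto
  have hAB: "(f has_sum ((\<Sum>j. f (int (Suc j))) + (\<Sum>j. f (- int (Suc j))))) (A \<union> B)"
    by (rule has_sum_Un_disjoint[OF hA hB disj])
  have n0: "0 \<notin> A \<union> B" unfolding A_def B_def by auto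
  have U: "insert 0 (A \<union> B) = UNIV"
  proof (intro set_eqI iffI)
    fix n :: int
    show "n \<in> insert 0 (A \<union> B)"
    proof (cases "n > 0")
      case True
      then have "n = int (Suc (nat n - 1))" by simp
      then show ?thesis unfolding A_def by blast
    next
      case False
      show ?thesis
      proof (cases "n = 0")
        case False
        with \<open>\<not> n > 0\<close> have "n = - int (Suc (nat (- n) - 1))" by simp
        then show ?thesis unfolding B_def by blast
      qed simp
    qed
  qed simp
  show ?thesis using has_sum_insert[OF n0 hAB] unfolding U .
qed

lemma theta4_eq:
  assumes u: "0 < u"
  shows "theta4 (of_real v) (\<i> * of_real u) = of_real (Theta (exp (- pi * u)) (2 * pi * v))"
proof -
  define p where "p = exp (- pi * u)"
  define x where "x = 2 * pi * v"
  have p: "0 < p" "p < 1" unfolding p_def using u by auto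
  define Z where "Z = cis x"
  have P: "exp (of_real pi * \<i> * (\<i> * of_real u)) = (of_real p :: complex)"
    unfolding p_def by (simp flip: exp_of_real add: algebra_simps)
  have Zeq: "exp (2 * of_real pi * \<i> * of_real v) = Z"
    unfolding Z_def x_def cis_conv_exp by (simp add: algebra_simps)
  define f where "f n = (of_real p :: complex) ^ nat (n^2) * (- Z) powi n" for n :: int
  have th: "theta4 (of_real v) (\<i> * of_real u) = (\<Sum>\<^sub>\<infinity>n. f n)"
    unfolding theta4_def Let_def P Zeq f_def ..
  have nZ: "norm (- Z) = 1" unfolding Z_def by simp
  define t where "t j = (-1)^Suc j * p^(Suc j * Suc j) * cos (real (Suc j) * x)" for j
  have f1: "f (int (Suc j)) = of_real (p^(Suc j * Suc j)) * (- Z)^Suc j" for j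
  proof -
    have "nat ((int (Suc j))^2) = nat (int (Suc j * Suc j))" by (simp only: power2_eq_square of_nat_mult)
    also have "\<dots> = Suc j * Suc j" by (rule nat_int)
    finally have "nat ((int (Suc j))^2) = Suc j * Suc j" .
    then show ?thesis unfolding f_def by (simp add: power_int_of_nat del: of_nat_Suc)
  qed
  have f2: "f (- int (Suc j)) = of_real (p^(Suc j * Suc j)) * inverse ((- Z)^Suc j)" for j
  proof -
    have "nat ((- int (Suc j))^2) = nat (int (Suc j * Suc j))" by (simp only: power2_minus power2_eq_square of_nat_mult)
    also have "\<dots> = Suc j * Suc j" by (rule nat_int)
    finally have "nat ((- int (Suc j))^2) = Suc j * Suc j" .
    then show ?thesis unfolding f_def by (simp add: power_int_minus power_int_of_nat del: of_nat_Suc)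
  qed
  have nf1: "norm (f (int (Suc j))) = p^(Suc j * Suc j)" for j
    unfolding f1 norm_mult norm_power nZ norm_of_real using p by simp
  have nf2: "norm (f (- int (Suc j))) = p^(Suc j * Suc j)" for j
    unfolding f2 norm_mult norm_inverse norm_power nZ norm_of_real using p by simp
  have sp: "summable (\<lambda>j. p^(Suc j * Suc j))"
  proof (rule summable_comparison_test[of _ "\<lambda>j. p^Suc j"])
    show "summable (\<lambda>j. p ^ Suc j)" using p by (simp add: summable_geometric)
    show "\<exists>N. \<forall>n\<ge>N. norm (p^(Suc n * Suc n)) \<le> p ^ Suc n"
      using p by (intro exI[of _ 0] allI impI) (simp add: power_decreasing)
  qed
  have s1: "summable (\<lambda>j. norm (f (int (Suc j))))" unfolding nf1 by (rule sp)
  have s2: "summable (\<lambda>j. norm (f (- int (Suc j))))" unfolding nf2 by (rule sp)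
  note hs = has_sum_int_split[OF s1 s2]
  have pair: "f (int (Suc j)) + f (- int (Suc j)) = of_real (2 * t j)" for j
  proof -
    have zm: "(- Z)^Suc j = (-1)^Suc j * cis (real (Suc j) * x)"
    proof -
      have "(- Z)^Suc j = (-1)^Suc j * Z^Suc j" by (rule power_minus)
      then show ?thesis unfolding Z_def by (simp only: Complex.DeMoivre)
    qed
    have zi: "inverse ((- Z)^Suc j) = (-1)^Suc j * cis (- (real (Suc j) * x))"
    proof -
      have im: "inverse ((-1::complex)^m) = (-1)^m" for m by (induct m) simp_all
      show ?thesis unfolding zm inverse_mult_distrib im cis_inverse ..
    qed
    have c: "cis (real (Suc j) * x) + cis (- (real (Suc j) * x)) = of_real (2 * cos (real (Suc j) * x))"
      by (simp add: complex_eq_iff)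
    have "f (int (Suc j)) + f (- int (Suc j)) = of_real (p^(Suc j * Suc j)) * (-1)^Suc j * (cis (real (Suc j) * x) + cis (- (real (Suc j) * x)))"
      unfolding f1 f2 zi unfolding zm by (simp add: algebra_simps)
    also have "\<dots> = of_real (2 * t j)" unfolding c t_def by simp
    finally show ?thesis .
  qed
  have st: "summable t"
    unfolding t_def by (rule Theta_summable[OF p])
  have "(\<Sum>j. f (int (Suc j))) + (\<Sum>j. f (- int (Suc j))) = (\<Sum>j. f (int (Suc j)) + f (- int (Suc j)))"
    by (rule suminf_add[OF summable_norm_cancel[OF s1] summable_norm_cancel[OF s2]])
  also have "\<dots> = (\<Sum>j. of_real (2 * t j))" unfolding pair ..
  also have "\<dots> = of_real (\<Sum>j. 2 * t j)"
    by (rule suminf_of_real[symmetric]) (intro summable_mult st)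
  also have "(\<Sum>j. 2 * t j) = 2 * (\<Sum>j. t j)"
    by (rule suminf_mult[OF st])
  finally have sum: "(\<Sum>j. f (int (Suc j))) + (\<Sum>j. f (- int (Suc j))) = of_real (2 * (\<Sum>j. t j))" .
  have f0: "f 0 = 1" unfolding f_def by simp
  have "(\<Sum>\<^sub>\<infinity>n. f n) = f 0 + ((\<Sum>j. f (int (Suc j))) + (\<Sum>j. f (- int (Suc j))))"
    by (rule infsumI[OF hs])
  also have "\<dots> = of_real (Theta p x)"
    unfolding sum f0 Theta_def t_def by simp
  finally show ?thesis unfolding th p_def x_def .
qed

theorem corollary2p2:
  fixes q u v :: real
  assumes "0 < q" "q < 1" "0 < u"
  shows "(cmod (qpoch_inf (cpowq q (Complex u v)) q)
           \<ge> Re (qpoch_inf (cpowq q (of_real u)) q) * q powr (v^2 / 4)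
         \<and> Im (qpoch_inf (cpowq q (of_real u)) q) = 0)
       \<and> (Re (qGamma q (of_real u)) \<ge> cmod (qGamma q (Complex u v)) * q powr (v^2 / 4)
         \<and> Im (qGamma q (of_real u)) = 0)
       \<and> (Re (theta4 (of_real v) (\<i> * of_real u) / theta4 0 (\<i> * of_real u))
           \<ge> exp (- pi * v^2 / u)
         \<and> Im (theta4 (of_real v) (\<i> * of_real u) / theta4 0 (\<i> * of_real u)) = 0)"
proof -
  define p where "p = exp (- pi * u)"
  have p: "0 < p" "p < 1" unfolding p_def using assms by auto
  have T1: "theta4 (of_real v) (\<i> * of_real u) = of_real (Theta p (2 * pi * v))"
    unfolding p_def by (rule theta4_eq[OF assms(3)])
  have T0: "theta4 0 (\<i> * of_real u) = of_real (Theta p 0)"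
    using theta4_eq[OF assms(3), of 0] unfolding p_def by simp
  have pos: "Theta p 0 > 0" and ge: "Theta p (2 * pi * v) \<ge> Theta p 0"
    using Theta_ineq[OF p] by auto
  have ratio: "theta4 (of_real v) (\<i> * of_real u) / theta4 0 (\<i> * of_real u) = of_real (Theta p (2 * pi * v) / Theta p 0)"
    unfolding T1 T0 by simp
  have r1: "Theta p (2 * pi * v) / Theta p 0 \<ge> 1" using pos ge by simp
  have "- pi * v^2 / u \<le> 0" using assms(3) by (simp add: divide_nonpos_pos)
  then have e1: "exp (- pi * v^2 / u) \<le> 1" by simp
  have part3: "Re (theta4 (of_real v) (\<i> * of_real u) / theta4 0 (\<i> * of_real u)) \<ge> exp (- pi * v^2 / u)"
    unfolding ratio Re_complex_of_real using e1 r1 by linarith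
  show ?thesis using part12[OF assms, of v] part3 unfolding ratio by simp
qed

end
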